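(* Let $k\ge 4$ and let $w$ be a minimal uncompletable word for $S_k$. Let $p$ be an occurrence of $v=b^{k-1}a$ and $q$ an occurrence of $u=ba^{k-1}$ in $w$ that are consecutive ($p$ before $q$), with sets of forbidden local positions $F_p$ and $F_q$. If $F_q=\{0,i,i+1,\dots,k-1\}$ for some $1\le i\le k-1$ and $|F_p|=|F_q|$, then the occurrences $p$ and $q$ overlap and $F_p=\{0,i-1,i,\dots,k-2\}$.
   Context: $\Sigma=\{a,b\}$. $S_k=\left(\Sigma^k\setminus\{ba^{k-1},b^{k-1}a\}\right)\cup\left(\Sigma^{k-1}\setminus\{a^{k-1},b^{k-1}\}\right)$, $u=ba^{k-1}$, $v=b^{k-1}a$. $\mathit{Fact}(S^* )$ and $\mathit{Pref}(S^* )$ are the sets of factors and of prefixes of words in $S^*$. A word $w\notin\mathit{Fact}(S_k^* )$ is uncompletable; a minimal uncompletable word is one of minimal length. For $w=w_1\cdots w_n$, $w[i..j]=w_i\cdots w_j$ (empty if $i>j$). A position $j$, $0\le j\le n-1$, is forbidden in $w$ if $w[j+1..n]\notin\mathit{Pref}(S_k^* )$. An occurrence of $p\in\{u,v\}$ in $w$ is an index $s$ with $w[s+1..s+k]=p$; local position $i\in\{0,\dots,k-1\}$ is the position $s+i$ of $w$, and it is forbidden in the occurrence if $s+i$ is forbidden in $w$. Two occurrences of words from $\{u,v\}$ starting at $s<t$ overlap if $t<s+k$; they are consecutive if either they overlap or they are the only occurrences of $u$ or $v$ lying inside the factor $w[s+1..t+k]$. *)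

theory Defs
  imports Main
begin

datatype letter = a | b

type_synonym word = "letter list"

definition Sk :: "nat \<Rightarrow> word set" where
  "Sk k = ({w. length w = k} - {b # replicate (k-1) a, replicate (k-1) b @ [a]})
        \<union> ({w. length w = k - 1} - {replicate (k-1) a, replicate (k-1) b})"

definition ustar :: "word set \<Rightarrow> word set" where
  "ustar S = {concat ws | ws. set ws \<subseteq> S}"

definition Fact :: "word set \<Rightarrow> word set" where
  "Fact L = {x. \<exists>y z. y @ x @ z \<in> L}"

definition Pref :: "word set \<Rightarrow> word set" where
  "Pref L = {x. \<exists>z. x @ z \<in> L}"

definition uncompletable :: "nat \<Rightarrow> word \<Rightarrow> bool" where
  "uncompletable k w \<longleftrightarrow> w \<notin> Fact (ustar (Sk k))"

definition minimal_uncompletable :: "nat \<Rightarrow> word \<Rightarrow> bool" where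
  "minimal_uncompletable k w \<longleftrightarrow> uncompletable k w \<and>
     (\<forall>w'. uncompletable k w' \<longrightarrow> length w \<le> length w')"

text \<open>w[i..j] with 1-based indices, empty if i > j.\<close>
definition factor :: "word \<Rightarrow> nat \<Rightarrow> nat \<Rightarrow> word" where
  "factor w i j = take (Suc j - i) (drop (i - 1) w)"

definition forbidden :: "nat \<Rightarrow> word \<Rightarrow> nat \<Rightarrow> bool" where
  "forbidden k w j \<longleftrightarrow> j < length w \<and>
     factor w (j+1) (length w) \<notin> Pref (ustar (Sk k))"

definition uu :: "nat \<Rightarrow> word" where "uu k = b # replicate (k-1) a"
definition vv :: "nat \<Rightarrow> word" where "vv k = replicate (k-1) b @ [a]"

definition occurrence :: "nat \<Rightarrow> word \<Rightarrow> word \<Rightarrow> nat \<Rightarrow> bool" where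
  "occurrence k w p s \<longleftrightarrow> s + k \<le> length w \<and> factor w (s+1) (s+k) = p"

definition forbidden_local :: "nat \<Rightarrow> word \<Rightarrow> nat \<Rightarrow> nat set" where
  "forbidden_local k w s = {i. i < k \<and> forbidden k w (s + i)}"

definition overlap :: "nat \<Rightarrow> nat \<Rightarrow> nat \<Rightarrow> bool" where
  "overlap k s t \<longleftrightarrow> t < s + k"

definition consecutive :: "nat \<Rightarrow> word \<Rightarrow> nat \<Rightarrow> nat \<Rightarrow> bool" where
  "consecutive k w s t \<longleftrightarrow> s < t \<and>
     (overlap k s t \<or>
      (\<forall>r. (occurrence k w (uu k) r \<or> occurrence k w (vv k) r) \<and> s \<le> r \<and> r + k \<le> t + k
            \<longrightarrow> r = s \<or> r = t))"

end

theory Submission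
  imports Defs
begin
abbreviation PS :: "nat \<Rightarrow> word set" where "PS k \<equiv> Pref (ustar (Sk k))"

lemma forbidden_iff: "forbidden k w j \<longleftrightarrow> j < length w \<and> drop j w \<notin> PS k"
  by (simp add: forbidden_def factor_def)

lemma occ_iff: "occurrence k w p s \<longleftrightarrow> s + k \<le> length w \<and> take k (drop s w) = p"
  by (simp add: occurrence_def factor_def)

lemma take_drop_eq_nth:
  "x + m \<le> length w \<Longrightarrow> take m (drop x w) = L \<longleftrightarrow> length L = m \<and> (\<forall>q<m. w ! (x+q) = L ! q)"
  by (auto simp: list_eq_iff_nth_eq)

lemma vv_nth: "q < k \<Longrightarrow> vv k ! q = (if q < k-1 then b else a)"
  by (auto simp: vv_def nth_append)

lemma uu_nth: "q < k \<Longrightarrow> uu k ! q = (if q = 0 then b else a)"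
  by (cases q) (auto simp: uu_def)

lemma len_uu: "k \<ge> 1 \<Longrightarrow> length (uu k) = k" by (simp add: uu_def)
lemma len_vv: "k \<ge> 1 \<Longrightarrow> length (vv k) = k" by (simp add: vv_def)

lemma uu_notin: "k \<ge> 1 \<Longrightarrow> uu k \<notin> Sk k" by (auto simp: Sk_def uu_def)
lemma vv_notin: "k \<ge> 1 \<Longrightarrow> vv k \<notin> Sk k" by (auto simp: Sk_def vv_def)
lemma rep_notin: "k \<ge> 1 \<Longrightarrow> replicate (k-1) c \<notin> Sk k" by (cases c) (auto simp: Sk_def)

lemma short_pref:
  assumes "k \<ge> 2" "length x \<le> k - 1" shows "x \<in> PS k"
proof -
  let ?y = "x @ replicate (k - length x) b"
  have l: "length ?y = k" using assms by simp
  have lst: "last ?y = b" using assms by simp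
  have "last (b # replicate (k-1) a) = a" using assms by (cases "k-1") auto
  moreover have "last (replicate (k-1) b @ [a]) = a" by simp
  ultimately have "?y \<in> Sk k" using l lst by (auto simp: Sk_def)
  hence "?y \<in> ustar (Sk k)" unfolding ustar_def by (intro CollectI exI[of _ "[?y]"]) auto
  thus ?thesis unfolding Pref_def by blast
qed

lemma cons_pref: "y \<in> Sk k \<Longrightarrow> r \<in> PS k \<Longrightarrow> y @ r \<in> PS k"
proof -
  assume y: "y \<in> Sk k" and "r \<in> PS k"
  then obtain z ws where "r @ z = concat ws" "set ws \<subseteq> Sk k"
    unfolding Pref_def ustar_def by blast
  hence "(y @ r) @ z = concat (y # ws)" "set (y#ws) \<subseteq> Sk k" using y by auto
  thus ?thesis unfolding Pref_def ustar_def by blast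
qed

lemma Sk_len: "W \<in> Sk k \<Longrightarrow> length W = k \<or> length W = k - 1"
  by (auto simp: Sk_def)

lemma pref_split:
  assumes "x \<in> PS k" "k \<le> length x" "k \<ge> 2"
  shows "\<exists>l. (l = k-1 \<or> l = k) \<and> take l x \<in> Sk k \<and> drop l x \<in> PS k"
proof -
  obtain z ws where e: "x @ z = concat ws" and ws: "set ws \<subseteq> Sk k"
    using assms(1) unfolding Pref_def ustar_def by blast
  have "ws \<noteq> []" using e assms by auto
  then obtain W ws' where wsd: "ws = W # ws'" by (cases ws) auto
  have W: "W \<in> Sk k" "set ws' \<subseteq> Sk k" using ws wsd by auto
  have lW: "length W = k \<or> length W = k - 1" using Sk_len[OF W(1)] .
  have le: "length W \<le> length x" using lW assms by auto
  have e2: "x @ z = W @ concat ws'" using e wsd by simp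
  have t: "take (length W) x = W"
    using arg_cong[OF e2, of "take (length W)"] le by simp
  have d: "drop (length W) x @ z = concat ws'"
    using arg_cong[OF e2, of "drop (length W)"] le by simp
  have "drop (length W) x \<in> PS k" using d W(2) unfolding Pref_def ustar_def by blast
  thus ?thesis using t W lW by metis
qed

lemma Fact_cut:
  assumes "k \<ge> 2"
  shows "y @ x @ z = concat ws \<Longrightarrow> set ws \<subseteq> Sk k \<Longrightarrow> \<exists>c<k. drop c x \<in> PS k"
proof (induction ws arbitrary: y)
  case Nil
  hence "x = []" by simp
  thus ?case using assms short_pref[of k "[]"] by (intro exI[of _ 0]) auto
next
  case (Cons W ws)
  have W: "W \<in> Sk k" "set ws \<subseteq> Sk k" using Cons.prems by auto
  show ?case
  proof (cases "y = []")
    case True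
    hence "x @ z = concat (W#ws)" using Cons.prems by simp
    hence "x \<in> PS k" using Cons.prems(2) unfolding Pref_def ustar_def by blast
    thus ?thesis using assms by (intro exI[of _ 0]) auto
  next
    case False
    show ?thesis
    proof (cases "length W \<le> length y")
      case True
      have e: "y @ x @ z = W @ concat ws" using Cons.prems by simp
      have "drop (length W) y @ x @ z = concat ws"
        using arg_cong[OF e, of "drop (length W)"] True by simp
      thus ?thesis using Cons.IH W(2) by blast
    next
      case False2: False
      define c where "c = length W - length y"
      have "length y > 0" using \<open>y \<noteq> []\<close> by simp
      hence ck: "c < k" using Sk_len[OF W(1)] False2 assms unfolding c_def by linarith
      have e: "y @ x @ z = W @ concat ws" using Cons.prems by simp
      have e2: "x @ z = drop (length y) W @ concat ws"
        using arg_cong[OF e, of "drop (length y)"] False2 by simp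
      have lc: "length (drop (length y) W) = c" by (simp add: c_def)
      show ?thesis
      proof (cases "c \<le> length x")
        case True
        have "drop c x @ z = concat ws"
          using arg_cong[OF e2, of "drop c"] True lc by simp
        hence "drop c x \<in> PS k" using W(2) unfolding Pref_def ustar_def by blast
        thus ?thesis using ck by blast
      next
        case False
        hence "drop c x = []" by simp
        thus ?thesis using ck short_pref[of k "[]"] assms by auto
      qed
    qed
  qed
qed

lemma window_block:
  assumes win: "\<forall>l<k. forbidden k w (j+l)" and k: "k \<ge> 2"
  shows "y < j \<Longrightarrow> forbidden k w y"
proof (induction "j - y" arbitrary: y rule: less_induct)
  case less
  have "forbidden k w (j+(k-1))" using win k proof -
    have "k - 1 < k" using k by simp
    thus ?thesis using win by blast
  qed
  hence n: "j + (k-1) < length w" using forbidden_iff by blast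
  show ?case
  proof (rule ccontr)
    assume nf: "\<not> forbidden k w y"
    have yl: "y < length w" using less.prems n by simp
    hence P: "drop y w \<in> PS k" using nf forbidden_iff by blast
    have "k \<le> length (drop y w)" using n less.prems by simp
    then obtain l where l: "l = k-1 \<or> l = k" "drop l (drop y w) \<in> PS k"
      using pref_split[OF P _ k] by blast
    have P2: "drop (y+l) w \<in> PS k" using l(2) by (simp add: add.commute)
    show False
    proof (cases "y + l < j")
      case True
      have "forbidden k w (y+l)" using less.hyps[of "y+l"] True l(1) k less.prems by auto
      thus False using P2 forbidden_iff by blast
    next
      case False
      then obtain q where q: "y + l = j + q" "q < k" using l(1) less.prems k
        by (intro that[of "y + l - j"]) auto
      have "forbidden k w (j+q)" using win q by blast
      thus False using P2 q(1) forbidden_iff by metis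
    qed
  qed
qed

lemma min_pos:
  assumes "minimal_uncompletable k w" "k \<ge> 2"
  shows "\<exists>x. 1 \<le> x \<and> x \<le> k \<and> \<not> forbidden k w x"
proof -
  have "[] \<in> Fact (ustar (Sk k))" unfolding Fact_def ustar_def
    by (auto intro!: exI[of _ "[]"])
  hence "w \<noteq> []" using assms(1) unfolding minimal_uncompletable_def uncompletable_def by auto
  hence "length (tl w) < length w" by simp
  hence "\<not> uncompletable k (tl w)" using assms(1) unfolding minimal_uncompletable_def by force
  then obtain y z ws where e: "y @ tl w @ z = concat ws" "set ws \<subseteq> Sk k"
    unfolding uncompletable_def Fact_def ustar_def by blast
  obtain c where c: "c < k" "drop c (tl w) \<in> PS k" using Fact_cut[OF assms(2) e] by blast
  have "drop (Suc c) w \<in> PS k" using c(2) by (simp add: drop_Suc)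
  hence "\<not> forbidden k w (Suc c)" using forbidden_iff by blast
  thus ?thesis using c(1) by (intro exI[of _ "Suc c"]) auto
qed

theorem lemma6:
  fixes k :: nat and w :: word and s t i :: nat
  assumes "k \<ge> 4"
    and "minimal_uncompletable k w"
    and "occurrence k w (vv k) s"
    and "occurrence k w (uu k) t"
    and "consecutive k w s t"
    and "1 \<le> i" and "i \<le> k - 1"
    and "forbidden_local k w t = {0} \<union> {i..k-1}"
    and "card (forbidden_local k w s) = card (forbidden_local k w t)"
  shows "overlap k s t \<and> forbidden_local k w s = {0} \<union> {i-1..k-2}"
proof -
  note k4 = assms(1)
  have k2: "k \<ge> 2" using k4 by simp
  have sn: "s + k \<le> length w" and Vs: "\<forall>q<k. w ! (s+q) = (if q < k-1 then b else a)"
    using assms(3) k4 by (auto simp: occ_iff take_drop_eq_nth len_vv vv_nth)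
  have tn: "t + k \<le> length w" and Ut0: "\<forall>q<k. w ! (t+q) = uu k ! q"
    using assms(4) k4 by (auto simp: occ_iff take_drop_eq_nth len_uu)
  have Ut: "\<forall>q<k. w ! (t+q) = (if q = 0 then b else a)"
    using Ut0 uu_nth by metis
  have st: "s < t" using assms(5) by (simp add: consecutive_def)
  have Fq: "\<forall>l<k. forbidden k w (t+l) \<longleftrightarrow> (l = 0 \<or> i \<le> l)"
  proof (intro allI impI)
    fix l assume "l < k"
    have "l \<in> forbidden_local k w t \<longleftrightarrow> forbidden k w (t+l)"
      using \<open>l<k\<close> by (simp add: forbidden_local_def)
    thus "forbidden k w (t+l) \<longleftrightarrow> (l = 0 \<or> i \<le> l)" using assms(8) \<open>l<k\<close> by auto
  qed
  have cardFq: "card (forbidden_local k w t) = k - i + 1"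
  proof -
    have "0 \<notin> {i..k-1}" using assms(6) by simp
    hence "card ({0} \<union> {i..k-1}) = Suc (card {i..k-1})" by simp
    thus ?thesis using assms(8,6,7) by simp
  qed
  have Fsub: "forbidden_local k w s \<subseteq> {..<k}" by (auto simp: forbidden_local_def)
  have i2: "i \<ge> 2"
  proof (rule ccontr)
    assume "\<not> i \<ge> 2"
    hence i1: "i = 1" using assms(6) by simp
    have win: "\<forall>l<k. forbidden k w (t+l)" using Fq i1 by auto
    obtain x where x: "1 \<le> x" "x \<le> k" "\<not> forbidden k w x" using min_pos[OF assms(2) k2] by blast
    show False
    proof (cases "x < t")
      case True
      thus False using window_block[OF win k2 True] x(3) by blast
    next
      case False
      hence "x = t + (x - t)" "x - t < k" using x st by auto
      thus False using win x(3) by metis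
    qed
  qed
  show ?thesis
  proof (cases "overlap k s t")
    case True
    hence tsk: "t < s + k" by (simp add: overlap_def)
    have tdef: "t = s + k - 2"
    proof (rule ccontr)
      assume ne: "t \<noteq> s + k - 2"
      show False
      proof (cases "t + 1 \<le> s + k - 1")
        case True
        hence "t + 1 - s < k - 1" using ne st tsk by auto
        hence "w ! (s + (t+1-s)) = b" using Vs[rule_format, of "t+1-s"] by simp
        moreover have "w ! (t + 1) = a" using Ut[rule_format, of 1] k4 by simp
        ultimately show False using st by simp
      next
        case False
        hence "t = s + (k-1)" using tsk k4 by auto
        hence "w ! (s + (k-1)) = b" using Ut[rule_format, of 0] k4 by simp
        moreover have "w ! (s + (k-1)) = a" using Vs[rule_format, of "k-1"] k4 by simp
        ultimately show False by simp
      qed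
    qed
    have nge: "length w \<ge> s + 2*k - 2" using tn tdef k4 by simp
    have f0: "forbidden k w s"
    proof -
      have sl: "s < length w" using sn k4 by simp
      { assume P: "drop s w \<in> PS k"
        have "k \<le> length (drop s w)" using sn by simp
        then obtain l where l: "l = k-1 \<or> l = k" "take l (drop s w) \<in> Sk k"
          using pref_split[OF P _ k2] by blast
        have False
        proof (cases "l = k")
          case True
          hence "take l (drop s w) = vv k" using assms(3) by (simp add: occ_iff)
          thus False using l(2) vv_notin k4 by simp
        next
          case False
          hence lk: "l = k-1" using l by simp
          have "take (k-1) (drop s w) = replicate (k-1) b"
            using Vs sn by (subst take_drop_eq_nth) auto
          thus False using l(2) lk rep_notin[of k b] k4 by simp
        qed }
      thus ?thesis using sl forbidden_iff by blast
    qed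
    have fm: "forbidden k w (s+m)" if m: "i - 1 \<le> m" "m \<le> k - 2" for m
    proof -
      have sl: "s + m < length w" using nge m k4 by simp
      { assume P: "drop (s+m) w \<in> PS k"
        have "k \<le> length (drop (s+m) w)" using nge m k4 by simp
        then obtain l where l: "l = k-1 \<or> l = k" "take l (drop (s+m) w) \<in> Sk k"
            "drop l (drop (s+m) w) \<in> PS k"
          using pref_split[OF P _ k2] by blast
        have False
        proof (cases "l = k")
          case True
          show False
          proof (cases "m = k-2")
            case True
            hence "s + m = t" using tdef k4 by simp
            hence "take l (drop (s+m) w) = uu k" using assms(4) \<open>l = k\<close> by (simp add: occ_iff)
            thus False using l(2) uu_notin k4 by simp
          next
            case False
            hence "m + 2 < k" "i \<le> m + 2" using m k4 by auto
            hence "forbidden k w (t + (m+2))" using Fq by blast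
            moreover have "t + (m+2) = l + (s+m)" using \<open>l = k\<close> tdef k4 by simp
            hence "drop (t + (m+2)) w = drop l (drop (s+m) w)" by (metis drop_drop)
            ultimately show False using l(3) forbidden_iff by metis
          qed
        next
          case False
          hence lk: "l = k-1" using l by simp
          have "m + 1 < k" "i \<le> m + 1" using m k4 assms(6) by auto
          hence "forbidden k w (t + (m+1))" using Fq by blast
          moreover have "t + (m+1) = l + (s+m)" using lk tdef k4 by simp
          hence "drop (t + (m+1)) w = drop l (drop (s+m) w)" by (metis drop_drop)
          ultimately show False using l(3) forbidden_iff by metis
        qed }
      thus ?thesis using sl forbidden_iff by blast
    qed
    have sup: "{0} \<union> {i-1..k-2} \<subseteq> forbidden_local k w s"
      using f0 fm k4 by (auto simp: forbidden_local_def)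
    have c: "card ({0} \<union> {i-1..k-2}) = k - i + 1"
    proof -
      have "0 \<notin> {i-1..k-2}" using i2 by simp
      hence "card ({0} \<union> {i-1..k-2}) = Suc (card {i-1..k-2})" by simp
      thus ?thesis using i2 assms(7) k4 by simp
    qed
    have "{0} \<union> {i-1..k-2} = forbidden_local k w s"
      using card_subset_eq[OF finite_subset[OF Fsub] sup] c cardFq assms(9) by simp
    thus ?thesis using True by simp
  next
    case False
    hence tsk: "s + k \<le> t" by (simp add: overlap_def)
    have noocc: "\<not> occurrence k w (uu k) r \<and> \<not> occurrence k w (vv k) r" if "s < r" "r < t" for r
      using assms(5) False that unfolding consecutive_def by fastforce
    have b1: "\<not> (\<forall>q<k-1. w ! (x+q) = a)" if "s < x" "x < t" for x
      using that
    proof (induction x)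
      case 0 thus ?case by simp
    next
      case (Suc x)
      show ?case
      proof
        assume A: "\<forall>q<k-1. w ! (Suc x + q) = a"
        show False
        proof (cases "x = s")
          case True
          have "w ! (s + 1) = a" using A[rule_format, of 0] k4 True by simp
          moreover have "w ! (s + 1) = b" using Vs[rule_format, of 1] k4 by simp
          ultimately show False by simp
        next
          case False
          hence sx: "s < x" "x < t" using Suc.prems by auto
          show False
          proof (cases "w ! x")
            case a
            have "\<forall>q<k-1. w ! (x+q) = a"
            proof (intro allI impI)
              fix q assume "q < k-1"
              show "w ! (x+q) = a"
              proof (cases q)
                case 0 thus ?thesis using a by simp
              next
                case (Suc q') thus ?thesis using A[rule_format, of q'] \<open>q<k-1\<close> by simp
              qed
            qed
            thus False using Suc.IH sx by blast
          next
            case b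
            have "take k (drop x w) = uu k"
            proof (subst take_drop_eq_nth)
              show "x + k \<le> length w" using sx tn by simp
              show "length (uu k) = k \<and> (\<forall>q<k. w ! (x + q) = uu k ! q)"
              proof (intro conjI allI impI)
                show "length (uu k) = k" using len_uu k4 by simp
                fix q assume "q < k"
                show "w ! (x + q) = uu k ! q"
                proof (cases q)
                  case 0 thus ?thesis using b uu_nth[of 0 k] k4 by simp
                next
                  case (Suc q') thus ?thesis using A[rule_format, of q'] \<open>q<k\<close> uu_nth[of q k] by simp
                qed
              qed
            qed
            hence "occurrence k w (uu k) x" using sx tn by (simp add: occ_iff)
            thus False using noocc sx by blast
          qed
        qed
      qed
    qed
    have b2: "\<not> (\<forall>q<k-1. w ! (x+q) = b)" if "s < x" "x < t" for x
    proof -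
      have "\<forall>x. t - x = d \<longrightarrow> s < x \<longrightarrow> x < t \<longrightarrow> \<not> (\<forall>q<k-1. w ! (x+q) = b)" for d
      proof (induction d rule: less_induct)
        case (less d)
        show ?case
        proof (intro allI impI notI)
          fix x assume d: "t - x = d" and sx: "s < x" "x < t" and B: "\<forall>q<k-1. w ! (x+q) = b"
          show False
          proof (cases "w ! (x + (k-1))")
            case a
            have "take k (drop x w) = vv k"
            proof (subst take_drop_eq_nth)
              show "x + k \<le> length w" using sx tn by simp
              show "length (vv k) = k \<and> (\<forall>q<k. w ! (x + q) = vv k ! q)"
              proof (intro conjI allI impI)
                show "length (vv k) = k" using len_vv k4 by simp
                fix q assume "q < k"
                show "w ! (x + q) = vv k ! q"
                proof (cases "q < k-1")
                  case True thus ?thesis using B \<open>q<k\<close> vv_nth[of q k] by simp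
                next
                  case False
                  hence "q = k-1" using \<open>q<k\<close> by simp
                  thus ?thesis using a \<open>q<k\<close> vv_nth[of q k] by simp
                qed
              qed
            qed
            hence "occurrence k w (vv k) x" using sx tn by (simp add: occ_iff)
            thus False using noocc sx by blast
          next
            case b
            have B2: "\<forall>q<k-1. w ! (Suc x + q) = b"
            proof (intro allI impI)
              fix q assume "q < k-1"
              show "w ! (Suc x + q) = b"
              proof (cases "q = k-2")
                case True
                hence "Suc x + q = x + (k-1)" using k4 by simp
                thus ?thesis using b by metis
              next
                case False
                thus ?thesis using B[rule_format, of "Suc q"] \<open>q<k-1\<close> by simp
              qed
            qed
            show False
            proof (cases "Suc x = t")
              case True
              have "w ! (t + 1) = a" using Ut[rule_format, of 1] k4 by simp
              moreover have "w ! (t + 1) = b" using B2[rule_format, of 1] True k4 by simp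
              ultimately show False by simp
            next
              case False
              hence "Suc x < t" using sx by simp
              have lt: "t - Suc x < d" using d sx by simp
              have "s < Suc x" using sx by simp
              thus False using less.IH[OF lt, rule_format, of "Suc x"] \<open>Suc x < t\<close> B2 by blast
            qed
          qed
        qed
      qed
      thus ?thesis using that by blast
    qed
    have step: "drop y w \<in> PS k" if y: "s < y" "y < t" and P: "drop (y + l) w \<in> PS k" and l: "l = k-1 \<or> l = k" for y l
    proof -
      have yl: "y + k \<le> length w" using y tn by simp
      have "take l (drop y w) \<in> Sk k"
      proof (cases "l = k")
        case True
        have "take k (drop y w) \<noteq> uu k" using noocc[OF y] yl by (simp add: occ_iff)
        moreover have "take k (drop y w) \<noteq> vv k" using noocc[OF y] yl by (simp add: occ_iff)
        moreover have "length (take k (drop y w)) = k" using yl by simp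
        ultimately show ?thesis using True unfolding Sk_def uu_def vv_def by auto
      next
        case False
        hence lk: "l = k-1" using l by simp
        have "take (k-1) (drop y w) \<noteq> replicate (k-1) c" for c
        proof
          assume "take (k-1) (drop y w) = replicate (k-1) c"
          hence "\<forall>q<k-1. w ! (y+q) = c" using yl by (subst (asm) take_drop_eq_nth) auto
          thus False using b1[OF y] b2[OF y] by (cases c) auto
        qed
        moreover have "length (take (k-1) (drop y w)) = k-1" using yl by simp
        ultimately show ?thesis using lk unfolding Sk_def by auto
      qed
      moreover have "drop y w = take l (drop y w) @ drop (y+l) w"
        by (metis append_take_drop_id drop_drop add.commute)
      ultimately show ?thesis using cons_pref P by metis
    qed
    have path: "\<forall>y. s < y \<longrightarrow> y + j*(k-1) \<le> z \<longrightarrow> z \<le> y + j*k \<longrightarrow> drop y w \<in> PS k"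
      if z: "z \<le> t + i - 1" "drop z w \<in> PS k" for z j
    proof (induction j)
      case 0 thus ?case using z by auto
    next
      case (Suc j)
      show ?case
      proof (intro allI impI)
        fix y assume y: "s < y" "y + Suc j * (k-1) \<le> z" "z \<le> y + Suc j * k"
        have e1: "Suc j * (k-1) = j*(k-1) + (k-1)" "Suc j * k = j*k + k" by simp_all
        have e2: "j*(k-1) \<le> j*k" by simp
        have yt: "y < t" using y(2) z(1) e1 assms(7) k4 by linarith
        show "drop y w \<in> PS k"
        proof (cases "y + k + j*(k-1) \<le> z")
          case True
          have "s < y + k" "y + k + j*(k-1) \<le> z" "z \<le> y + k + j*k"
            using y True e1 e2 k4 by linarith+
          hence "drop (y+k) w \<in> PS k" using Suc.IH by blast
          thus ?thesis using step[OF y(1) yt] by blast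
        next
          case False
          have "s < y + (k-1)" "y + (k-1) + j*(k-1) \<le> z" "z \<le> y + (k-1) + j*k"
            using y False e1 e2 k4 by linarith+
          hence "drop (y+(k-1)) w \<in> PS k" using Suc.IH by blast
          thus ?thesis using step[OF y(1) yt] by blast
        qed
      qed
    qed
    have zP: "drop (t+l) w \<in> PS k" if "1 \<le> l" "l \<le> i - 1" for l
    proof -
      have "l < k" using that assms(7) by simp
      hence "\<not> forbidden k w (t+l)" using Fq that i2 by auto
      moreover have "t + l < length w" using tn \<open>l<k\<close> by simp
      ultimately show ?thesis using forbidden_iff by blast
    qed
    have good: "\<not> forbidden k w (s+m)" if m: "1 \<le> m" and ex: "t+1 \<le> z" "z \<le> t+i-1" "s+m+j*(k-1) \<le> z" "z \<le> s+m+j*k" for m j z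
    proof -
      have "drop z w \<in> PS k" using zP[of "z - t"] ex by simp
      hence "drop (s+m) w \<in> PS k" using path[of z j] ex m by auto
      thus ?thesis using forbidden_iff by blast
    qed
    define D where "D = t - s"
    define j0 where "j0 = D div k"
    define r where "r = D mod k"
    define P where "P = j0 * k"
    have Dd: "D = P + r" unfolding P_def j0_def r_def by simp
    have rk: "r < k" unfolding r_def using k4 by simp
    have j01: "j0 \<ge> 1" proof -
      have "k div k \<le> D div k" unfolding D_def using tsk by (intro div_le_mono) simp
      thus ?thesis unfolding j0_def using k4 by simp
    qed
    have Pj: "j0 * (k-1) = P - j0" "Suc j0 * k = P + k" "Suc j0 * (k-1) = P + k - j0 - 1" "j0 \<le> P"
      unfolding P_def using k4 j01 by (simp_all add: diff_mult_distrib2)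
    define A where "A = {r+1..min (r+i) (k-1)} \<union> {1..r+i+1-k}"
    have Ag: "m \<ge> 1 \<and> m < k \<and> \<not> forbidden k w (s+m)" if "m \<in> A" for m
    proof (cases "r + 1 \<le> m")
      case True
      have m: "m \<le> min (r+i) (k-1)" "m \<ge> 1" using that True rk assms(7) unfolding A_def by auto
      have tt: "t = s + P + r" using Dd st unfolding D_def by simp
      define z where "z = min (t-r+m) (t+i-1)"
      have "t+1 \<le> z" "z \<le> t+i-1" "s+m+j0*(k-1) \<le> z" "z \<le> s+m+j0*k"
        unfolding z_def using tt m True Pj i2 j01 P_def by auto
      hence "\<not> forbidden k w (s+m)" using good[of m z j0] m by auto
      thus ?thesis using m k4 by auto
    next
      case False
      have m: "m \<le> r+i+1-k" "m \<ge> 1" using that False unfolding A_def by auto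
      have tt: "t = s + P + r" using Dd st unfolding D_def by simp
      define z where "z = min (t-r+m+k) (t+i-1)"
      have "t+1 \<le> z" "z \<le> t+i-1" "s+m+Suc j0*(k-1) \<le> z" "z \<le> s+m+Suc j0*k"
        unfolding z_def using tt m False Pj i2 j01 rk P_def by auto
      hence "\<not> forbidden k w (s+m)" using good[of m z "Suc j0"] m by auto
      thus ?thesis using m rk assms(7) by auto
    qed
    have cA: "card A = i"
    proof -
      have "{r+1..min (r+i) (k-1)} \<inter> {1..r+i+1-k} = {}" using assms(7) by auto
      hence "card A = card {r+1..min (r+i) (k-1)} + card {1..r+i+1-k}"
        unfolding A_def by (simp add: card_Un_disjoint)
      thus ?thesis using rk assms(7) by auto
    qed
    have "forbidden_local k w s \<subseteq> {..<k} - A"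
      using Ag by (auto simp: forbidden_local_def)
    moreover have "A \<subseteq> {..<k}" using Ag by auto
    ultimately have "card (forbidden_local k w s) \<le> k - i"
      using cA card_mono[of "{..<k} - A"] card_Diff_subset[of A "{..<k}"] by (simp add: finite_subset)
    thus ?thesis using assms(9) cardFq by simp
  qed
qed

end
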